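(* For even $n\to\infty$, $$\sum_{w\in\mathcal{W}_n}\nu(w)\,V(w)\sim\frac{\sqrt{2\pi}}{8}\,n\sqrt{n}.$$
   Context: A configuration of length $n$ is a word $w=w_1\cdots w_n$ over $\{1,2\}$ with $|w|_1=|w|_2$; $\mathcal{W}_n$ is the set of such words. A flip at position $i$ exchanges $w_i$ and $w_{i+1}$ when $w_i\ne w_{i+1}$; let $F(w)$ be the number of positions $i$ at which a flip can be performed, i.e. the number of $i\in\{1,\dots,n-1\}$ with $w_i\ne w_{i+1}$. The natural distribution $\nu$ on $\mathcal{W}_n$ is the stationary distribution of the random walk that at each step performs a uniformly random flip among all possible flips; it is given by $\nu(w)=F(w)/\sum_{w'\in\mathcal{W}_n}F(w')$. The configuration $w$ is represented by the broken line through the points $(k,\,|w_1\cdots w_k|_1-|w_1\cdots w_k|_2)$, $k=0,\dots,n$; the volume $V(w)$ is the area between this broken line and the horizontal axis. *)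

theory Defs
  imports "HOL-Analysis.Analysis" "HOL-Library.Landau_Symbols"
begin

text \<open>Configurations: words over {1,2} (as lists of naturals) with equally many 1s and 2s.
  Positions are 0-indexed in Isabelle lists: w ! i is the paper's w_(i+1).\<close>

definition occ :: "nat \<Rightarrow> nat list \<Rightarrow> nat" where
  "occ a w = length (filter (\<lambda>x. x = a) w)"

definition configs :: "nat \<Rightarrow> nat list set" where
  "configs n = {w. length w = n \<and> set w \<subseteq> {1, 2} \<and> occ 1 w = occ 2 w}"

definition flips :: "nat list \<Rightarrow> nat" where
  "flips w = card {i. i + 1 < length w \<and> w ! i \<noteq> w ! (i + 1)}"

definition nu :: "nat \<Rightarrow> nat list \<Rightarrow> real" where
  "nu n w = real (flips w) / (\<Sum>w'\<in>configs n. real (flips w'))"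

definition height :: "nat list \<Rightarrow> nat \<Rightarrow> real" where
  "height w k = real (occ 1 (take k w)) - real (occ 2 (take k w))"

definition broken_line :: "nat list \<Rightarrow> real \<Rightarrow> real" where
  "broken_line w x = (let k = nat \<lfloor>x\<rfloor> in
      height w k + (x - real k) * (height w (Suc k) - height w k))"

definition volume :: "nat list \<Rightarrow> real" where
  "volume w = integral {0..real (length w)} (\<lambda>x. \<bar>broken_line w x\<bar>)"

definition mean_volume :: "nat \<Rightarrow> real" where
  "mean_volume n = (\<Sum>w\<in>configs n. nu n w * volume w)"

end

theory Submission
  imports Defs "HOL-Real_Asymp.Real_Asymp"
begin


definition ht :: "nat list \<Rightarrow> int" where "ht xs = int (occ 1 xs) - int (occ 2 xs)"

lemma occ_append: "occ a (xs@ys) = occ a xs + occ a ys" by (simp add: occ_def)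
lemma occ_Cons: "occ a (x#xs) = (if x = a then 1 else 0) + occ a xs" by (simp add: occ_def)
lemma occ_Nil[simp]: "occ a [] = 0" by (simp add: occ_def)
lemma ht_append: "ht (xs@ys) = ht xs + ht ys" by (simp add: ht_def occ_append)
lemma ht_Nil[simp]: "ht [] = 0" by (simp add: ht_def)
lemma ht_Cons1[simp]: "ht (1#xs) = ht xs + 1" by (simp add: ht_def occ_Cons)
lemma ht_Cons2[simp]: "ht (2#xs) = ht xs - 1" by (simp add: ht_def occ_Cons)
lemma ht_Cons1'[simp]: "ht (Suc 0#xs) = ht xs + 1" by (simp add: ht_def occ_Cons)
lemma height_ht: "height w k = real_of_int (ht (take k w))" by (simp add: height_def ht_def)

definition Wset :: "nat \<Rightarrow> nat list set" where "Wset n = {w. length w = n \<and> set w \<subseteq> {1,2}}"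

lemma finite_Wset[simp]: "finite (Wset n)"
proof -
  have "finite {xs. set xs \<subseteq> {1::nat,2} \<and> length xs = n}" by (rule finite_lists_length_eq) simp
  then show ?thesis unfolding Wset_def by (simp add: conj_commute)
qed

lemma Wset_0[simp]: "Wset 0 = {[]}" by (auto simp: Wset_def)

lemma Wset_Suc: "Wset (Suc n) = (Cons 1) ` Wset n \<union> (Cons 2) ` Wset n"
proof
  show "Wset (Suc n) \<subseteq> (Cons 1) ` Wset n \<union> (Cons 2) ` Wset n"
  proof
    fix w assume "w \<in> Wset (Suc n)"
    then obtain c x where w: "w = c # x" "length x = n" "set x \<subseteq> {1,2}" "c \<in> {1,2}"
      by (cases w) (auto simp: Wset_def)
    then show "w \<in> (Cons 1) ` Wset n \<union> (Cons 2) ` Wset n" by (auto simp: Wset_def)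
  qed
qed (auto simp: Wset_def)

lemma sum_Wset_Suc: "(\<Sum>x\<in>Wset (Suc n). f x) = (\<Sum>x\<in>Wset n. f (1#x) + f (2#x))"
proof -
  have d: "(Cons 1) ` Wset n \<inter> (Cons 2) ` Wset n = {}" by auto
  have "(\<Sum>x\<in>Wset (Suc n). f x) = (\<Sum>x\<in>(Cons 1) ` Wset n. f x) + (\<Sum>x\<in>(Cons 2) ` Wset n. f x)"
    unfolding Wset_Suc by (rule sum.union_disjoint) (use d in auto)
  also have "\<dots> = (\<Sum>x\<in>Wset n. f (1#x)) + (\<Sum>x\<in>Wset n. f (2#x))"
    by (subst (1 2) sum.reindex) (auto simp: inj_on_def)
  finally show ?thesis by (simp add: sum.distrib)
qed

lemma configs_eq: "configs n = {w\<in>Wset n. ht w = 0}"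
  by (auto simp: configs_def Wset_def ht_def)

lemma finite_configs[simp]: "finite (configs n)" unfolding configs_eq by simp

lemma sum_Wset_append:
  "(\<Sum>w\<in>Wset (a+b). F (take a w) (drop a w)) = (\<Sum>x\<in>Wset a. \<Sum>y\<in>Wset b. F x y)"
proof -
  have "(\<Sum>x\<in>Wset a. \<Sum>y\<in>Wset b. F x y) = (\<Sum>(x,y)\<in>Wset a \<times> Wset b. F x y)"
    by (rule sum.cartesian_product)
  also have "\<dots> = (\<Sum>w\<in>Wset (a+b). F (take a w) (drop a w))"
    by (rule sum.reindex_bij_witness[where j="\<lambda>(x,y). x@y" and i="\<lambda>w. (take a w, drop a w)"])
       (auto simp: Wset_def dest: in_set_takeD in_set_dropD)
  finally show ?thesis by simp
qed

fun N :: "nat \<Rightarrow> int \<Rightarrow> int" where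
  "N 0 h = (if h = 0 then 1 else 0)"
| "N (Suc a) h = N a (h-1) + N a (h+1)"

lemma N_out: "int a < \<bar>h\<bar> \<Longrightarrow> N a h = 0"
  by (induction a arbitrary: h) auto

lemma N_sym: "N a (-h) = N a h"
proof (induction a arbitrary: h)
  case (Suc a)
  have e1: "-h-1 = -(h+1)" "-h+1 = -(h-1)" by simp_all
  have "N a (-h - 1) = N a (h+1)" using Suc.IH[of "h+1"] by (simp only: e1)
  moreover have "N a (-h + 1) = N a (h-1)" using Suc.IH[of "h-1"] by (simp only: e1)
  ultimately show ?case by simp
qed simp

lemma N_nonneg: "N a h \<ge> 0"
  by (induction a arbitrary: h) auto

lemma sum_shift_up:
  fixes g :: "int \<Rightarrow> 'b::comm_monoid_add"
  assumes "g (-K) = 0" "g (K+1) = 0" "0 \<le> K"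
  shows "(\<Sum>h=-K..K. g (h+1)) = (\<Sum>h=-K..K. g h)"
proof -
  have im: "(\<lambda>h. h+1) ` {-K..K} = {-K+1..K+1}"
    by (auto simp: image_iff intro!: bexI[where x="_ - 1"])
  have "(\<Sum>h=-K..K. g (h+1)) = (\<Sum>h=-K+1..K+1. g h)"
    by (subst im[symmetric], subst sum.reindex) (auto simp: inj_on_def)
  also have "{-K+1..K+1} = insert (K+1) {-K+1..K}" using assms by auto
  also have "(\<Sum>h\<in>insert (K+1) {-K+1..K}. g h) = (\<Sum>h=-K+1..K. g h)" using assms by (simp)
  also have "{-K..K} = insert (-K) {-K+1..K}" using assms by auto
  hence "(\<Sum>h=-K..K. g h) = (\<Sum>h=-K+1..K. g h)" using assms by simp
  finally show ?thesis by simp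
qed

lemma sum_shift_down:
  fixes g :: "int \<Rightarrow> 'b::comm_monoid_add"
  assumes "g (-K-1) = 0" "g K = 0" "0 \<le> K"
  shows "(\<Sum>h=-K..K. g (h-1)) = (\<Sum>h=-K..K. g h)"
proof -
  have "(\<Sum>h=-K..K. g (h-1)) = (\<Sum>h=-K..K. g (-(-h+1)))" by simp
  also have "\<dots> = (\<Sum>h=-K..K. g (-(h+1)))"
    by (rule sum.reindex_bij_witness[where i=uminus and j=uminus]) auto
  also have "\<dots> = (\<Sum>h=-K..K. g (- h))"
    by (rule sum_shift_up) (use assms in auto)
  also have "\<dots> = (\<Sum>h=-K..K. g h)"
    by (rule sum.reindex_bij_witness[where i=uminus and j=uminus]) auto
  finally show ?thesis .
qed

lemma L1:
  fixes f :: "int \<Rightarrow> real"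
  assumes "int a \<le> K"
  shows "(\<Sum>x\<in>Wset a. f (ht x)) = (\<Sum>h=-K..K. of_int (N a h) * f h)"
  using assms
proof (induction a arbitrary: f)
  case 0
  have "(\<Sum>h=-K..K. of_int (N 0 h) * f h) = (\<Sum>h=-K..K. if h = 0 then f h else 0)"
    by (rule sum.cong) auto
  then show ?case using 0 by simp
next
  case (Suc a)
  have K: "int a < K" "0 \<le> K" using Suc.prems by auto
  have "(\<Sum>x\<in>Wset (Suc a). f (ht x)) = (\<Sum>x\<in>Wset a. f (ht x + 1) + f (ht x - 1))"
    by (simp add: sum_Wset_Suc)
  also have "\<dots> = (\<Sum>h=-K..K. of_int (N a h) * (f (h+1) + f (h-1)))"
    using Suc.IH[of "\<lambda>h. f (h+1) + f (h-1)"] K by simp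
  also have "\<dots> = (\<Sum>h=-K..K. of_int (N a ((h+1)-1)) * f (h+1)) + (\<Sum>h=-K..K. of_int (N a ((h-1)+1)) * f (h-1))"
    by (simp add: sum.distrib algebra_simps)
  also have "(\<Sum>h=-K..K. of_int (N a ((h+1)-1)) * f (h+1)) = (\<Sum>h=-K..K. of_int (N a (h-1)) * f h)"
    by (rule sum_shift_up[where g="\<lambda>h. of_int (N a (h-1)) * f h"]) (use K in \<open>auto simp: N_out\<close>)
  also have "(\<Sum>h=-K..K. of_int (N a ((h-1)+1)) * f (h-1)) = (\<Sum>h=-K..K. of_int (N a (h+1)) * f h)"
    by (rule sum_shift_down[where g="\<lambda>h. of_int (N a (h+1)) * f h"]) (use K in \<open>auto simp: N_out\<close>)
  finally show ?case by (simp add: sum.distrib[symmetric] algebra_simps)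
qed

lemma sum_window_delta:
  fixes c :: int
  assumes "int b \<le> K"
  shows "(\<Sum>h=-K..K. of_int (N b h) * (if c + h = 0 then 1 else 0) :: real) = of_int (N b (-c))"
proof (cases "-c \<in> {-K..K}")
  case True
  have "(\<Sum>h=-K..K. of_int (N b h) * (if c + h = 0 then 1 else 0) :: real)
      = (\<Sum>h=-K..K. if h = -c then of_int (N b (-c)) else 0)"
    by (rule sum.cong) auto
  then show ?thesis using True by simp
next
  case False
  then have "N b (-c) = 0" using assms by (intro N_out) auto
  moreover have "(\<Sum>h=-K..K. of_int (N b h) * (if c + h = 0 then 1 else 0) :: real) = 0"
    using False by (intro sum.neutral) auto
  ultimately show ?thesis by simp
qed

lemma sum_configs_at:
  fixes f :: "int \<Rightarrow> real"
  assumes "k \<le> n" "int n \<le> K"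
  shows "(\<Sum>u\<in>configs n. f (ht (take k u))) = (\<Sum>h=-K..K. of_int (N k h * N (n-k) h) * f h)"
proof -
  have "(\<Sum>u\<in>configs n. f (ht (take k u))) = (\<Sum>w\<in>Wset n. if ht w = 0 then f (ht (take k w)) else 0)"
    unfolding configs_eq by (simp add: sum.inter_filter)
  also have "\<dots> = (\<Sum>w\<in>Wset (k + (n-k)). (\<lambda>x y. if ht x + ht y = 0 then f (ht x) else 0) (take k w) (drop k w))"
    using assms by (simp add: ht_append[symmetric])
  also have "\<dots> = (\<Sum>x\<in>Wset k. \<Sum>y\<in>Wset (n-k). if ht x + ht y = 0 then f (ht x) else 0)"
    by (rule sum_Wset_append)
  also have "\<dots> = (\<Sum>x\<in>Wset k. f (ht x) * of_int (N (n-k) (- ht x)))"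
  proof (rule sum.cong[OF refl])
    fix x
    have "(\<Sum>y\<in>Wset (n-k). if ht x + ht y = 0 then f (ht x) else 0)
        = f (ht x) * (\<Sum>y\<in>Wset (n-k). (\<lambda>h. if ht x + h = 0 then 1 else 0) (ht y))"
      by (simp add: sum_distrib_left if_distrib cong: if_cong)
    also have "\<dots> = f (ht x) * (\<Sum>h=-K..K. of_int (N (n-k) h) * (if ht x + h = 0 then 1 else 0))"
      using assms by (subst L1[where K=K]) auto
    also have "\<dots> = f (ht x) * of_int (N (n-k) (- ht x))"
      using assms by (subst sum_window_delta) auto
    finally show "(\<Sum>y\<in>Wset (n-k). if ht x + ht y = 0 then f (ht x) else 0) = f (ht x) * of_int (N (n-k) (- ht x))" .
  qed
  also have "\<dots> = (\<Sum>h=-K..K. of_int (N k h) * (f h * of_int (N (n-k) (- h))))"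
    using assms by (subst L1[where K=K]) auto
  finally show ?thesis by (simp add: N_sym algebra_simps)
qed



lemma aux3: "(h - 1) * (A + B) = (1+c) * (A - B) \<Longrightarrow> (h+1)*(B + C) = (1+c)*(B - C) \<Longrightarrow> h*(A+B) + h*(B+C) = (c+2)*(A - C)"
  for h A B C c :: int by algebra

lemma N_F3: "h * N (Suc c) h = int (Suc c) * (N c (h-1) - N c (h+1))"
proof (induction c arbitrary: h)
  case 0
  show ?case by (cases "h = 1"; cases "h = -1") auto
next
  case (Suc c)
  have e1: "h - 1 - 1 = h - 2" "h - 1 + 1 = h" "h + 1 - 1 = h" "h + 1 + 1 = h + 2" by simp_all
  have R1: "N (Suc c) (h-1) = N c (h-2) + N c h" by (simp only: N.simps e1)
  have R2: "N (Suc c) (h+1) = N c h + N c (h+2)" by (simp only: N.simps e1)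
  have I1: "(h-1) * (N c (h-2) + N c h) = (1 + int c) * (N c (h-2) - N c h)"
    using Suc.IH[of "h-1"] by (simp only: e1 R1 of_nat_Suc)
  have I2: "(h+1) * (N c h + N c (h+2)) = (1 + int c) * (N c h - N c (h+2))"
    using Suc.IH[of "h+1"] by (simp only: e1 R2 of_nat_Suc)
  have "h * N (Suc (Suc c)) h = h * (N c (h-2) + N c h) + h * (N c h + N c (h+2))"
    by (simp only: N.simps(2) e1 distrib_left)
  also have "\<dots> = (int c + 2) * (N c (h-2) - N c (h+2))" by (rule aux3[OF I1 I2])
  also have "\<dots> = int (Suc (Suc c)) * (N (Suc c) (h-1) - N (Suc c) (h+1))"
    by (simp only: R1 R2) simp
  finally show ?case .
qed

lemma N_odd: "odd (int a + h) \<Longrightarrow> N a h = 0"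
proof (induction a arbitrary: h)
  case (Suc a)
  have "odd (int a + (h-1))" "odd (int a + (h+1))" using Suc.prems by auto
  then show ?case using Suc.IH by simp
qed (cases "h = 0", auto)

lemma N_binom: "j \<le> a \<Longrightarrow> N a (2*int j - int a) = int (a choose j)"
proof (induction a arbitrary: j)
  case 0
  then show ?case by simp
next
  case (Suc a)
  have S: "N (Suc a) (2*int j - int (Suc a)) = N a (2*int j - int a - 2) + N a (2*int j - int a)"
    by (simp add: algebra_simps)
  show ?case
  proof (cases j)
    case 0
    then show ?thesis using S Suc.IH[of 0] by (simp add: N_out)
  next
    case (Suc j')
    show ?thesis
    proof (cases "j' < a")
      case True
      have "N a (2*int j - int a - 2) = int (a choose j')"
        using Suc.IH[of j'] True \<open>j = Suc j'\<close> by (simp add: algebra_simps)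
      moreover have "N a (2*int j - int a) = int (a choose j)"
        using Suc.IH[of j] True \<open>j = Suc j'\<close> by simp
      ultimately show ?thesis using S \<open>j = Suc j'\<close> by simp
    next
      case False
      then have "j' = a" using Suc.prems \<open>j = Suc j'\<close> by simp
      then show ?thesis using S Suc.IH[of a] \<open>j = Suc j'\<close> by (simp add: N_out algebra_simps)
    qed
  qed
qed

definition cc :: "nat \<Rightarrow> real" where "cc j = real ((2*j) choose j)"

lemma cc_rec_nat: "Suc j * ((2*Suc j) choose Suc j) = 2 * (2*j+1) * ((2*j) choose j)"
proof -
  have a: "Suc j * (Suc (2*j+1) choose Suc j) = Suc (2*j+1) * ((2*j+1) choose j)"
    by (rule Suc_times_binomial)
  have b: "(2*j+1) choose j = (2*j+1) choose (Suc j)"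
    using binomial_symmetric[of j "2*j+1"] by simp
  have c: "Suc j * (Suc (2*j) choose Suc j) = Suc (2*j) * ((2*j) choose j)"
    by (rule Suc_times_binomial)
  have e: "2*Suc j = Suc (2*j+1)" by simp
  have "Suc j * ((2*Suc j) choose Suc j) = Suc (2*j+1) * ((2*j+1) choose Suc j)"
    using a b by (simp only: e)
  also have "\<dots> = 2 * (Suc j * (Suc (2*j) choose Suc j))" by simp
  also have "\<dots> = 2 * (2*j+1) * ((2*j) choose j)" by (simp only: c) simp
  finally show ?thesis .
qed

lemma cc_rec: "real (Suc j) * cc (Suc j) = 2 * (2 * real j + 1) * cc j"
proof -
  have "real (Suc j * ((2*Suc j) choose Suc j)) = real (2 * (2*j+1) * ((2*j) choose j))"
    by (simp only: cc_rec_nat)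
  then show ?thesis unfolding cc_def by (simp del: binomial_Suc_Suc add: algebra_simps)
qed

lemma N_even0: "N (2*j) 0 = (2*j) choose j"
  using N_binom[of j "2*j"] by simp

lemma N_odd1: "2 * N (2*j+1) 1 = (2*Suc j) choose (Suc j)"
proof -
  have "N (2*j+1) 1 = int ((2*j+1) choose Suc j)" using N_binom[of "Suc j" "2*j+1"] by simp
  moreover have "(2*j+1) choose j = (2*j+1) choose (Suc j)"
    using binomial_symmetric[of j "2*j+1"] by simp
  ultimately show ?thesis by simp
qed

lemma gsuc: "of_nat (Suc k) * (a gchoose Suc k) = (a - of_nat k) * (a gchoose k)"
  for a :: real
  by (metis gbinomial_absorption gbinomial_absorb_comp)

lemma cc_gchoose: "cc j = (-4)^j * ((-1/2) gchoose j)"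
proof (induction j)
  case 0 then show ?case by (simp add: cc_def)
next
  case (Suc j)
  have "real (Suc j) * cc (Suc j) = 2*(2*real j+1) * ((-4)^j * ((-1/2) gchoose j))"
    using cc_rec[of j] Suc.IH by simp
  also have "\<dots> = (-4)^(Suc j) * ((-1/2 - real j) * ((-1/2) gchoose j))"
    by (simp add: algebra_simps)
  also have "\<dots> = (-4)^(Suc j) * (real (Suc j) * ((-1/2) gchoose (Suc j)))"
    by (simp only: gsuc)
  also have "\<dots> = real (Suc j) * ((-4)^(Suc j) * ((-1/2) gchoose (Suc j)))"
    by (simp only: mult_ac)
  finally show ?case by (simp only: mult_cancel_left) simp
qed

definition dd :: "nat \<Rightarrow> real" where "dd j = (2 * real j + 1) * cc j"

lemma dd_gchoose: "dd j = (-4)^j * ((-3/2) gchoose j)"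
proof (induction j)
  case 0 then show ?case by (simp add: dd_def cc_def)
next
  case (Suc j)
  have "real (Suc j) * dd (Suc j) = (2 * real (Suc j) + 1) * (real (Suc j) * cc (Suc j))"
    by (simp add: dd_def)
  also have "\<dots> = 2 * (2 * real j + 3) * dd j"
    by (subst cc_rec) (simp add: dd_def algebra_simps)
  also have "\<dots> = 2 * (2 * real j + 3) * ((-4)^j * ((-3/2) gchoose j))"
    using Suc.IH by simp
  also have "\<dots> = (-4)^(Suc j) * ((-3/2 - real j) * ((-3/2) gchoose j))"
    by (simp add: algebra_simps)
  also have "\<dots> = (-4)^(Suc j) * (real (Suc j) * ((-3/2) gchoose (Suc j)))"
    by (simp only: gsuc)
  also have "\<dots> = real (Suc j) * ((-4)^(Suc j) * ((-3/2) gchoose (Suc j)))"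
    by (simp only: mult_ac)
  finally show ?case by (simp only: mult_cancel_left) simp
qed

lemma conv_pow: "(\<Sum>j\<le>M. ((-4::real)^j * x j) * ((-4)^(M-j) * y (M-j))) = (-4)^M * (\<Sum>j\<le>M. x j * y (M-j))"
  unfolding sum_distrib_left
proof (rule sum.cong[OF refl])
  fix j assume "j \<in> {..M}"
  then have "(-4::real)^j * (-4)^(M-j) = (-4)^M" by (simp add: power_add[symmetric])
  then show "((-4::real)^j * x j) * ((-4)^(M-j) * y (M-j)) = (-4)^M * (x j * y (M-j))"
    by (metis mult.assoc mult.left_commute)
qed

lemma conv_cc: "(\<Sum>j\<le>M. cc j * cc (M-j)) = 4^M"
proof -
  have "(\<Sum>j\<le>M. cc j * cc (M-j)) = (-4)^M * (\<Sum>j\<le>M. ((-1/2) gchoose j) * ((-1/2) gchoose (M-j)))"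
    unfolding cc_gchoose by (rule conv_pow)
  also have "(\<Sum>j\<le>M. ((-1/2::real) gchoose j) * ((-1/2) gchoose (M-j))) = ((-1/2) + (-1/2)) gchoose M"
    using gbinomial_Vandermonde[of "-1/2::real" "-1/2" M] by (simp add: atLeast0AtMost)
  also have "((-1/2::real) + (-1/2)) gchoose M = (-1)^M"
    using gbinomial_minus[of "1::real" M] by (simp add: binomial_gbinomial[symmetric])
  finally show ?thesis by (simp add: power_mult_distrib[symmetric])
qed

lemma conv_dd: "(\<Sum>j\<le>M. dd j * dd (M-j)) = 4^M * (real M + 1) * (real M + 2) / 2"
proof -
  have "(\<Sum>j\<le>M. dd j * dd (M-j)) = (-4)^M * (\<Sum>j\<le>M. ((-3/2) gchoose j) * ((-3/2) gchoose (M-j)))"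
    unfolding dd_gchoose by (rule conv_pow)
  also have "(\<Sum>j\<le>M. ((-3/2::real) gchoose j) * ((-3/2) gchoose (M-j))) = ((-3/2) + (-3/2)) gchoose M"
    using gbinomial_Vandermonde[of "-3/2::real" "-3/2" M] by (simp add: atLeast0AtMost)
  also have "((-3/2::real) + (-3/2)) gchoose M = (-1)^M * real ((M+2) choose M)"
    using gbinomial_minus[of "3::real" M] by (simp add: binomial_gbinomial add.commute)
  also have "real ((M+2) choose M) = (real M + 1) * (real M + 2) / 2"
  proof -
    have "(M+2) choose M = (M+2) choose 2" using binomial_symmetric[of M "M+2"] by simp
    also have "\<dots> = (M+2)*(M+1) div 2" by (simp add: choose_two)
    finally have "2 * ((M+2) choose M) = (M+2)*(M+1)" by simp
    then have "real (2 * ((M+2) choose M)) = real ((M+2)*(M+1))" by (simp only:)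
    then have "2 * real ((M+2) choose M) = (real M + 1) * (real M + 2)" by (simp add: algebra_simps)
    then show ?thesis by linarith
  qed
  finally show ?thesis by (simp add: power_mult_distrib[symmetric])
qed



lemma sum_abs_sym:
  fixes f :: "int \<Rightarrow> int"
  assumes sym: "\<And>h. f (-h) = f h"
  shows "(\<Sum>h=-K..K. \<bar>h\<bar> * f h) = 2 * (\<Sum>h=1..K. h * f h)"
proof -
  have "(\<Sum>h=-K..K. \<bar>h\<bar> * f h) = (\<Sum>h=-K..K. if 0 < h then h * f h else 0) + (\<Sum>h=-K..K. if h < 0 then (-h) * f h else 0)"
    by (subst sum.distrib[symmetric], rule sum.cong) auto
  also have "(\<Sum>h=-K..K. if h < 0 then (-h) * f h else 0) = (\<Sum>h=-K..K. if 0 < h then h * f h else 0)"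
    by (rule sum.reindex_bij_witness[where i=uminus and j=uminus]) (auto simp: sym)
  also have "(\<Sum>h=-K..K. if 0 < h then h * f h else 0) = (\<Sum>h\<in>{h\<in>{-K..K}. 0 < h}. h * f h)"
    by (rule sum.inter_filter[symmetric]) simp
  also have "{h\<in>{-K..K}. 0 < h} = {1..K}" by auto
  finally show ?thesis by simp
qed

lemma tele: "(\<Sum>h=1..int n. g (h-1) - g (h+1)) = g 0 + g 1 - g (int n) - g (int n + 1)"
  for g :: "int \<Rightarrow> int"
proof (induction n)
  case 0 then show ?case by simp
next
  case (Suc n)
  have "{1..int (Suc n)} = insert (int n + 1) {1..int n}" by auto
  then have "(\<Sum>h=1..int (Suc n). g (h-1) - g (h+1)) = (g (int n) - g (int n + 2)) + (\<Sum>h=1..int n. g (h-1) - g (h+1))"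
    by (simp add: add.commute)
  then show ?case using Suc.IH by (simp add: ac_simps)
qed

lemma Qform:
  assumes K: "K = int n0" "a + b + 3 \<le> n0"
  shows "int (Suc a + Suc b) * (\<Sum>h=-K..K. \<bar>h\<bar> * (N (Suc a) h * N (Suc b) h))
       = 4 * int (Suc a) * int (Suc b) * (N a 0 * N b 0 + N a 1 * N b 1)"
proof -
  define P where "P = (\<Sum>h=1..K. h * (N (Suc a) h * N (Suc b) h))"
  define X where "X = (\<Sum>h=1..K. (N a (h-1) - N a (h+1)) * N (Suc b) h)"
  define Y where "Y = (\<Sum>h=1..K. (N b (h-1) - N b (h+1)) * N (Suc a) h)"
  have Q: "(\<Sum>h=-K..K. \<bar>h\<bar> * (N (Suc a) h * N (Suc b) h)) = 2 * P"
    unfolding P_def by (rule sum_abs_sym) (simp add: N_sym)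
  have PX: "P = int (Suc a) * X"
    unfolding P_def X_def sum_distrib_left
  proof (rule sum.cong[OF refl])
    fix h show "h * (N (Suc a) h * N (Suc b) h) = int (Suc a) * ((N a (h-1) - N a (h+1)) * N (Suc b) h)"
      using N_F3[of h a] by (metis mult.assoc)
  qed
  have PY: "P = int (Suc b) * Y"
    unfolding P_def Y_def sum_distrib_left
  proof (rule sum.cong[OF refl])
    fix h show "h * (N (Suc a) h * N (Suc b) h) = int (Suc b) * ((N b (h-1) - N b (h+1)) * N (Suc a) h)"
      using N_F3[of h b] by (metis mult.assoc mult.commute)
  qed
  have XY: "X + Y = 2 * (\<Sum>h=1..K. N a (h-1) * N b (h-1) - N a (h+1) * N b (h+1))"
    unfolding X_def Y_def sum.distrib[symmetric] sum_distrib_left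
    by (rule sum.cong[OF refl]) (simp add: algebra_simps)
  also have "(\<Sum>h=1..K. N a (h-1) * N b (h-1) - N a (h+1) * N b (h+1)) = N a 0 * N b 0 + N a 1 * N b 1"
    using tele[of "\<lambda>h. N a h * N b h" n0] K by (simp add: N_out)
  finally have XY': "X + Y = 2 * (N a 0 * N b 0 + N a 1 * N b 1)" .
  have "int (Suc a + Suc b) * P = int (Suc a) * P + int (Suc b) * P" by (simp add: algebra_simps)
  also have "\<dots> = int (Suc a) * int (Suc b) * (X + Y)"
    by (subst (1) PY, subst PX) (simp add: algebra_simps)
  finally show ?thesis unfolding Q XY' by (simp add: algebra_simps)
qed

lemma sum_N0_zero: "(\<Sum>h=-K..K. \<bar>h\<bar> * (N 0 h * F h)) = 0"
  by (rule sum.neutral) auto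

lemma QK:
  assumes "k \<le> n" "K = int n0" "n + 1 \<le> n0"
  shows "int n * (\<Sum>h=-K..K. \<bar>h\<bar> * (N k h * N (n-k) h))
       = 4 * int k * int (n-k) * (N (k-1) 0 * N (n-k-1) 0 + N (k-1) 1 * N (n-k-1) 1)"
proof (cases "k = 0 \<or> k = n")
  case True
  then show ?thesis
  proof
    assume "k = 0" then show ?thesis using sum_N0_zero[where K=K and F="N n"] by simp
  next
    assume "k = n"
    then show ?thesis using sum_N0_zero[where K=K and F="N n"] by (simp add: mult.commute)
  qed
next
  case False
  then obtain a b where ab: "k = Suc a" "n - k = Suc b" using assms(1)
    by (metis Suc_diff_Suc not0_implies_Suc le_neq_implies_less)
  then have n: "n = Suc a + Suc b" using assms(1) by simp
  show ?thesis using Qform[of K n0 a b] assms unfolding ab n by simp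
qed

definition Avol :: "nat \<Rightarrow> real" where
  "Avol n = (\<Sum>u\<in>configs n. \<Sum>k\<le>n. \<bar>real_of_int (ht (take k u))\<bar>)"

definition Rz :: "nat \<Rightarrow> real" where
  "Rz n = (\<Sum>u\<in>configs n. \<Sum>k\<le>n. if ht (take k u) = 0 then 1 else 0)"

lemma Avol_eq: "real n * Avol n = (\<Sum>k\<le>n. 4 * real k * real (n-k) *
    real_of_int (N (k-1) 0 * N (n-k-1) 0 + N (k-1) 1 * N (n-k-1) 1))"
proof -
  have "Avol n = (\<Sum>k\<le>n. \<Sum>u\<in>configs n. \<bar>real_of_int (ht (take k u))\<bar>)"
    unfolding Avol_def by (rule sum.swap)
  also have "\<dots> = (\<Sum>k\<le>n. real_of_int (\<Sum>h=-int (n+1)..int (n+1). \<bar>h\<bar> * (N k h * N (n-k) h)))"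
  proof (rule sum.cong[OF refl])
    fix k assume "k \<in> {..n}"
    then show "(\<Sum>u\<in>configs n. \<bar>real_of_int (ht (take k u))\<bar>) = real_of_int (\<Sum>h=-int (n+1)..int (n+1). \<bar>h\<bar> * (N k h * N (n-k) h))"
      by (subst sum_configs_at[where K="int (n+1)"]) (auto simp: algebra_simps)
  qed
  finally have "real n * Avol n = (\<Sum>k\<le>n. real_of_int (int n * (\<Sum>h=-int (n+1)..int (n+1). \<bar>h\<bar> * (N k h * N (n-k) h))))"
    by (simp add: sum_distrib_left)
  also have "\<dots> = (\<Sum>k\<le>n. 4 * real k * real (n-k) *
    real_of_int (N (k-1) 0 * N (n-k-1) 0 + N (k-1) 1 * N (n-k-1) 1))"
  proof (rule sum.cong[OF refl])
    fix k assume k: "k \<in> {..n}"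
    have "int n * (\<Sum>h=-int (n+1)..int (n+1). \<bar>h\<bar> * (N k h * N (n-k) h))
       = 4 * int k * int (n-k) * (N (k-1) 0 * N (n-k-1) 0 + N (k-1) 1 * N (n-k-1) 1)"
      using QK[of k n "int (n+1)" "n+1"] k by simp
    then show "real_of_int (int n * (\<Sum>h=-int (n+1)..int (n+1). \<bar>h\<bar> * (N k h * N (n-k) h))) = 4 * real k * real (n-k) *
    real_of_int (N (k-1) 0 * N (n-k-1) 0 + N (k-1) 1 * N (n-k-1) 1)"
      by (metis (no_types, lifting) of_int_mult of_int_of_nat_eq of_int_numeral)
  qed
  finally show ?thesis .
qed

lemma Rz_eq: "Rz n = (\<Sum>k\<le>n. real_of_int (N k 0 * N (n-k) 0))"
proof -
  have "Rz n = (\<Sum>k\<le>n. \<Sum>u\<in>configs n. (\<lambda>h. if h = 0 then 1 else 0) (ht (take k u)))"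
    unfolding Rz_def by (rule sum.swap)
  also have "\<dots> = (\<Sum>k\<le>n. real_of_int (N k 0 * N (n-k) 0))"
  proof (rule sum.cong[OF refl])
    fix k assume "k \<in> {..n}"
    then have "(\<Sum>u\<in>configs n. (\<lambda>h. if h = 0 then 1 else 0) (ht (take k u)))
       = (\<Sum>h=-int n..int n. real_of_int (N k h * N (n-k) h) * (if h = 0 then 1 else 0))"
      by (subst sum_configs_at[where K="int n"]) auto
    also have "\<dots> = (\<Sum>h=-int n..int n. if h = 0 then real_of_int (N k 0 * N (n-k) 0) else 0)"
      by (rule sum.cong) auto
    also have "\<dots> = real_of_int (N k 0 * N (n-k) 0)" by simp
    finally show "(\<Sum>u\<in>configs n. (\<lambda>h. if h = 0 then 1 else 0) (ht (take k u))) = real_of_int (N k 0 * N (n-k) 0)" .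
  qed
  finally show ?thesis .
qed

lemma sum_even_odd: "(\<Sum>k\<le>2*m. g k) = (\<Sum>j\<le>m. g (2*j)) + (\<Sum>j<m. g (2*j+1))"
  for g :: "nat \<Rightarrow> real"
proof (induction m)
  case 0 then show ?case by simp
next
  case (Suc m)
  have "(\<Sum>k\<le>2*Suc m. g k) = (\<Sum>k\<le>2*m. g k) + g (2*m+1) + g (2*m+2)"
    by (simp add: numeral_2_eq_2)
  then show ?case using Suc.IH by simp
qed

lemma N_odd_len0: "N (2*j+1) 0 = 0" by (rule N_odd) simp
lemma N_odd_len0': "N (Suc (2*j)) 0 = 0" by (rule N_odd) simp
lemma N_even_len1: "N (2*j) 1 = 0" by (rule N_odd) simp

lemma N_odd1_cc: "real_of_int (N (2*j+1) 1) = cc (Suc j) / 2"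
  using arg_cong[OF N_odd1[of j], of real_of_int] unfolding cc_def by simp

lemma N_even0_cc: "real_of_int (N (2*j) 0) = cc j"
  using N_even0[of j] unfolding cc_def by simp

lemma Rz_val: "Rz (2*m) = 4^m"
proof -
  have "Rz (2*m) = (\<Sum>j\<le>m. real_of_int (N (2*j) 0 * N (2*m-2*j) 0)) + (\<Sum>j<m. real_of_int (N (2*j+1) 0 * N (2*m-(2*j+1)) 0))"
    unfolding Rz_eq by (rule sum_even_odd)
  also have "(\<Sum>j<m. real_of_int (N (2*j+1) 0 * N (2*m-(2*j+1)) 0)) = 0"
    by (rule sum.neutral) (simp del: N.simps add: N_odd_len0')
  also have "(\<Sum>j\<le>m. real_of_int (N (2*j) 0 * N (2*m-2*j) 0)) = (\<Sum>j\<le>m. cc j * cc (m-j))"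
  proof (rule sum.cong[OF refl])
    fix j assume "j \<in> {..m}"
    have "2*m-2*j = 2*(m-j)" by simp
    then show "real_of_int (N (2*j) 0 * N (2*m-2*j) 0) = cc j * cc (m-j)"
      by (simp only: of_int_mult N_even0_cc)
  qed
  finally show ?thesis using conv_cc by simp
qed



declare N.simps(2)[simp del]

lemma N_odd1_cc': "real_of_int (N (Suc (2*j)) 1) = cc (Suc j) / 2"
  using N_odd1_cc[of j] by simp

lemma ccdd: "real (Suc i) * cc (Suc i) = 2 * dd i"
  using cc_rec[of i] unfolding dd_def by simp

lemma even_term:
  assumes "j \<le> m"
  shows "4 * real (2*j) * real (2*m - 2*j) *
    real_of_int (N (2*j-1) 0 * N (2*m - 2*j - 1) 0 + N (2*j-1) 1 * N (2*m - 2*j - 1) 1)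
    = 4 * (real j * real (m-j) * cc j * cc (m-j))"
proof (cases "j = 0 \<or> j = m")
  case True
  then show ?thesis by auto
next
  case False
  then obtain i l where il: "j = Suc i" "m - j = Suc l" using assms
    by (metis Suc_diff_Suc not0_implies_Suc le_neq_implies_less)
  have e1: "2*j-1 = Suc (2*i)" "2*m - 2*j - 1 = Suc (2*l)" using il by auto
  have e2: "2*m - 2*j = 2 * (m-j)" by simp
  have "real_of_int (N (2*j-1) 0 * N (2*m - 2*j - 1) 0 + N (2*j-1) 1 * N (2*m - 2*j - 1) 1)
      = real_of_int (N (2*i+1) 1) * real_of_int (N (2*l+1) 1)"
    unfolding e1 by (simp del: N.simps add: N_odd_len0')
  also have "\<dots> = cc j * cc (m-j) / 4" using il by (simp add: N_odd1_cc')
  finally show ?thesis unfolding e2 by simp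
qed

lemma odd_term:
  assumes "j < m"
  shows "4 * real (2*j+1) * real (2*m - (2*j+1)) *
    real_of_int (N (2*j+1-1) 0 * N (2*m - (2*j+1) - 1) 0 + N (2*j+1-1) 1 * N (2*m - (2*j+1) - 1) 1)
    = 4 * (dd j * dd (m - 1 - j))"
proof -
  have e1: "2*j+1-1 = 2*j" "2*m - (2*j+1) - 1 = 2*(m-1-j)" using assms by auto
  have e2: "real (2*m - (2*j+1)) = 2 * real (m-1-j) + 1" using assms by linarith
  have "real_of_int (N (2*j+1-1) 0 * N (2*m - (2*j+1) - 1) 0 + N (2*j+1-1) 1 * N (2*m - (2*j+1) - 1) 1)
     = cc j * cc (m-1-j)"
    unfolding e1 by (simp del: N.simps add: N_even_len1 N_even0_cc)
  then show ?thesis unfolding e2 dd_def by simp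
qed

lemma S1: "(\<Sum>j\<le>M+2. real j * real (M+2-j) * cc j * cc (M+2-j)) = 4 * (\<Sum>i\<le>M. dd i * dd (M-i))"
proof -
  define f where "f j = real j * real (Suc (Suc M)-j) * cc j * cc (Suc (Suc M)-j)" for j
  have "(\<Sum>j\<le>Suc (Suc M). f j) = (\<Sum>j\<le>Suc M. f j) + f (Suc (Suc M))" by (rule sum.atMost_Suc)
  also have "(\<Sum>j\<le>Suc M. f j) = f 0 + (\<Sum>i\<le>M. f (Suc i))" by (rule sum.atMost_Suc_shift)
  finally have "(\<Sum>j\<le>Suc (Suc M). f j) = (\<Sum>i\<le>M. f (Suc i))" by (simp add: f_def)
  then have "(\<Sum>j\<le>Suc (Suc M). real j * real (Suc (Suc M)-j) * cc j * cc (Suc (Suc M)-j))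
      = (\<Sum>i\<le>M. real (Suc i) * real (Suc (Suc M) - Suc i) * cc (Suc i) * cc (Suc (Suc M) - Suc i))"
    by (simp only: f_def)
  also have "\<dots> = (\<Sum>i\<le>M. 4 * (dd i * dd (M-i)))"
  proof (rule sum.cong[OF refl])
    fix i assume "i \<in> {..M}"
    then have e: "Suc (Suc M) - Suc i = Suc (M-i)" by auto
    show "real (Suc i) * real (Suc (Suc M) - Suc i) * cc (Suc i) * cc (Suc (Suc M) - Suc i) = 4 * (dd i * dd (M-i))"
    proof -
      have "real (Suc i) * real (Suc (M-i)) * cc (Suc i) * cc (Suc (M-i)) = (real (Suc i) * cc (Suc i)) * (real (Suc (M-i)) * cc (Suc (M-i)))"
        by (simp only: mult_ac)
      also have "\<dots> = 4 * (dd i * dd (M-i))" unfolding ccdd by simp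
      finally show ?thesis unfolding e .
    qed
  qed
  finally show ?thesis by (simp add: sum_distrib_left)
qed

lemma Avol_val: "Avol (2*Suc M) = 2 * real (Suc M) * 4^M"
proof -
  define m where "m = Suc M"
  have "real (2*m) * Avol (2*m) = (\<Sum>j\<le>m. 4 * (real j * real (m-j) * cc j * cc (m-j))) + (\<Sum>j<m. 4 * (dd j * dd (m - 1 - j)))"
    unfolding Avol_eq sum_even_odd
    by (intro arg_cong2[where f="(+)"] sum.cong refl even_term odd_term) auto
  also have "(\<Sum>j<m. 4 * (dd j * dd (m - 1 - j))) = 4 * (\<Sum>j\<le>M. dd j * dd (M - j))"
    unfolding m_def lessThan_Suc_atMost by (simp add: sum_distrib_left)
  also have "\<dots> = 4 * (4^M * (real M + 1) * (real M + 2) / 2)" by (simp only: conv_dd)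
  finally have A: "real (2*m) * Avol (2*m) = 4 * (\<Sum>j\<le>m. real j * real (m-j) * cc j * cc (m-j)) + 4 * (4^M * (real M + 1) * (real M + 2) / 2)"
    by (simp add: sum_distrib_left)
  show ?thesis
  proof (cases M)
    case 0
    then show ?thesis using A unfolding m_def by simp
  next
    case (Suc M')
    have "m = M'+2" using Suc m_def by simp
    then have S: "(\<Sum>j\<le>m. real j * real (m-j) * cc j * cc (m-j)) = 4 * (4^M' * (real M' + 1) * (real M' + 2) / 2)"
      using S1[of M'] conv_dd[of M'] by simp
    have "real (2*m) * Avol (2*m) = 4 * (4 * (4^M' * (real M' + 1) * (real M' + 2) / 2)) + 4 * (4^M * (real M + 1) * (real M + 2) / 2)"
      using A unfolding S .
    also have "\<dots> = real (2*m) * (2 * real (Suc M) * 4^M)"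
      unfolding m_def Suc by (simp add: field_simps)
    finally have "real (2*m) * Avol (2*m) = real (2*m) * (2 * real (Suc M) * 4^M)" .
    then show ?thesis unfolding m_def by simp
  qed
qed



definition Vt :: "nat list \<Rightarrow> real" where
  "Vt w = (\<Sum>k\<le>length w. \<bar>real_of_int (ht (take k w))\<bar>)"

definition ins :: "nat list \<Rightarrow> nat \<Rightarrow> nat list \<Rightarrow> nat list" where
  "ins u i p = take i u @ p @ drop i u"

definition PP :: "nat list set" where "PP = {[1,2],[2,1]}"

lemma decomp: "i+1 < length w \<Longrightarrow> w = take i w @ [w!i, w!(i+1)] @ drop (i+2) w"
proof -
  assume a: "i+1 < length w"
  have "w = take i w @ w ! i # drop (Suc i) w" using a by (simp add: id_take_nth_drop)
  also have "drop (Suc i) w = w ! (i+1) # drop (i+2) w" using a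
    by (metis Cons_nth_drop_Suc Suc_eq_plus1 add_2_eq_Suc')
  finally show ?thesis by simp
qed

lemma ht_pair: "p \<in> PP \<Longrightarrow> ht p = 0" by (auto simp: PP_def ht_def occ_def)
lemma occ_pair: "p \<in> PP \<Longrightarrow> occ 1 p = 1 \<and> occ 2 p = 1" by (auto simp: PP_def occ_def)

lemma ins_configs:
  assumes "u \<in> configs n" "i \<le> n" "p \<in> PP"
  shows "ins u i p \<in> configs (n+2)"
proof -
  have "u = take i u @ drop i u" by simp
  then have "occ a u = occ a (take i u) + occ a (drop i u)" for a by (metis occ_append)
  then show ?thesis using assms occ_pair[OF assms(3)]
    by (auto simp: configs_def ins_def occ_append PP_def dest: in_set_takeD in_set_dropD)
qed

lemma fin_pos: "finite {i. i+1 < length w \<and> P i}"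
  by (rule finite_subset[of _ "{..<length w}"]) auto

lemma fin_pos': "finite {i. Suc i < length w \<and> P i}"
  by (rule finite_subset[of _ "{..<length w}"]) auto

lemma sum_flips: "(\<Sum>w\<in>configs n. real (flips w) * g w) =
   (\<Sum>(w,i)\<in>Sigma (configs n) (\<lambda>w. {i. i+1 < length w \<and> w!i \<noteq> w!(i+1)}). g w)"
proof -
  have "(\<Sum>w\<in>configs n. real (flips w) * g w) = (\<Sum>w\<in>configs n. \<Sum>i\<in>{i. i+1 < length w \<and> w!i \<noteq> w!(i+1)}. g w)"
    by (simp add: flips_def)
  also have "\<dots> = (\<Sum>(w,i)\<in>Sigma (configs n) (\<lambda>w. {i. i+1 < length w \<and> w!i \<noteq> w!(i+1)}). g w)"
    by (rule sum.Sigma) (auto intro: fin_pos fin_pos')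
  finally show ?thesis .
qed

lemma sum_insert_bij:
  "(\<Sum>(w,i)\<in>Sigma (configs (n+2)) (\<lambda>w. {i. i+1 < length w \<and> w!i \<noteq> w!(i+1)}). g w)
   = (\<Sum>(u,i,p)\<in>configs n \<times> ({..n} \<times> PP). g (ins u i p))"
proof (rule sum.reindex_bij_witness[symmetric, where j="\<lambda>(u,i,p). (ins u i p, i)"
      and i="\<lambda>(w,i). (take i w @ drop (i+2) w, i, [w!i, w!(i+1)])"])
  fix t assume t: "t \<in> configs n \<times> ({..n} \<times> PP)"
  then obtain u i p where t': "t = (u,i,p)" "u \<in> configs n" "i \<le> n" "p \<in> PP" by auto
  have lu: "length u = n" using t' by (simp add: configs_def)
  have lp: "length p = 2" using t' by (auto simp: PP_def)
  have "take i (ins u i p) = take i u" using lu t' by (simp add: ins_def)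
  moreover have "drop (i+2) (ins u i p) = drop i u" using lu lp t' by (simp add: ins_def)
  moreover have "[ins u i p ! i, ins u i p ! (i+1)] = p" using lu t' by (auto simp: ins_def nth_append PP_def)
  ultimately show "(\<lambda>(w,i). (take i w @ drop (i+2) w, i, [w!i, w!(i+1)])) ((\<lambda>(u,i,p). (ins u i p, i)) t) = t"
    using t' by simp
  show "(\<lambda>(u,i,p). (ins u i p, i)) t \<in> Sigma (configs (n+2)) (\<lambda>w. {i. i+1 < length w \<and> w!i \<noteq> w!(i+1)})"
    using t' ins_configs[of u n i p] lu by (auto simp: ins_def nth_append PP_def configs_def)
next
  fix s assume s: "s \<in> Sigma (configs (n+2)) (\<lambda>w. {i. i+1 < length w \<and> w!i \<noteq> w!(i+1)})"
  then obtain w i where s': "s = (w,i)" "w \<in> configs (n+2)" "i+1 < length w" "w!i \<noteq> w!(i+1)" by auto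
  have lw: "length w = n+2" using s' by (simp add: configs_def)
  have D: "w = take i w @ [w!i, w!(i+1)] @ drop (i+2) w" using decomp s' by blast
  have sw: "set w \<subseteq> {1,2}" using s' by (simp add: configs_def)
  have "w!i \<in> set w" "w!(i+1) \<in> set w" using s' by auto
  then have wi: "w!i \<in> {1,2}" "w!(i+1) \<in> {1,2}" using sw by auto
  then have pp: "[w!i, w!(i+1)] \<in> PP" using s' by (auto simp: PP_def)
  show "(\<lambda>(u,i,p). (ins u i p, i)) ((\<lambda>(w,i). (take i w @ drop (i+2) w, i, [w!i, w!(i+1)])) s) = s"
    using s' D lw by (simp add: ins_def)
  have "occ a w = occ a (take i w) + occ a [w!i, w!(i+1)] + occ a (drop (i+2) w)" for a
    using D by (metis occ_append add.assoc)
  then show "(\<lambda>(w,i). (take i w @ drop (i+2) w, i, [w!i, w!(i+1)])) s \<in> configs n \<times> ({..n} \<times> PP)"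
    using s' lw pp occ_pair[OF pp] sw
    by (auto simp: configs_def occ_append dest: in_set_takeD in_set_dropD)
qed auto



lemma ht_ins:
  assumes "length u = n" "i \<le> n" "p \<in> PP"
  shows "ht (take k (ins u i p)) = (if k \<le> i then ht (take k u) else if k = i+1 then ht (take i u) + ht [hd p] else ht (take (k-2) u))"
proof -
  have lp: "length p = 2" and p2: "p = [hd p, p!1]" using assms(3) by (auto simp: PP_def)
  have ltu: "length (take i u) = i" using assms by simp
  consider "k \<le> i" | "k = i+1" | "i+2 \<le> k" by linarith
  then show ?thesis
  proof cases
    case 1 then show ?thesis using assms by (simp add: ins_def)
  next
    case 2
    have "take k (ins u i p) = take i u @ [hd p]"
      using 2 ltu lp by (subst p2) (simp add: ins_def)
    then show ?thesis using 2 by (simp add: ht_append)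
  next
    case 3
    have "take k (ins u i p) = take i u @ p @ take (k-i-2) (drop i u)"
      using 3 ltu lp by (simp add: ins_def)
    moreover have "take (k-2) u = take i u @ take (k-i-2) (drop i u)"
      using 3 take_add[of i "k-i-2" u] by simp
    ultimately show ?thesis using 3 ht_pair[OF assms(3)] by (simp add: ht_append)
  qed
qed

lemma sum_ins_gen:
  fixes F G :: "nat \<Rightarrow> real"
  assumes "i \<le> n" "\<And>k. k \<le> i \<Longrightarrow> F k = G k" "\<And>k. i+2 \<le> k \<Longrightarrow> F k = G (k-2)"
  shows "(\<Sum>k\<le>n+2. F k) = (\<Sum>k\<le>n. G k) + G i + F (i+1)"
  using assms(1)
proof (induction n rule: dec_induct)
  case base
  have "(\<Sum>k\<le>i+2. F k) = (\<Sum>k\<le>i. F k) + F (i+1) + F (i+2)" by simp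
  also have "(\<Sum>k\<le>i. F k) = (\<Sum>k\<le>i. G k)" using assms(2) by simp
  also have "F (i+2) = G i" using assms(3)[of "i+2"] by simp
  finally show ?case by simp
next
  case (step n)
  have "(\<Sum>k\<le>Suc n+2. F k) = (\<Sum>k\<le>n+2. F k) + F (Suc n+2)" by simp
  also have "F (Suc n+2) = G (Suc n)" using assms(3)[of "Suc n+2"] step(1) by simp
  finally show ?case using step(3) by simp
qed

lemma Vt_ins:
  assumes "u \<in> configs n" "i \<le> n" "p \<in> PP"
  shows "Vt (ins u i p) = Vt u + \<bar>real_of_int (ht (take i u))\<bar> + \<bar>real_of_int (ht (take i u)) + real_of_int (ht [hd p])\<bar>"
proof -
  have lu: "length u = n" using assms by (simp add: configs_def)
  have li: "length (ins u i p) = n+2" using ins_configs[OF assms] by (simp add: configs_def)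
  show ?thesis
    unfolding Vt_def li lu
    by (subst sum_ins_gen[where i=i and G="\<lambda>k. \<bar>real_of_int (ht (take k u))\<bar>"])
       (use assms lu in \<open>auto simp: ht_ins\<close>)
qed

lemma abs_pm1: "\<bar>real_of_int h + 1\<bar> + \<bar>real_of_int h - 1\<bar> = 2 * \<bar>real_of_int h\<bar> + (if h = 0 then 2 else 0)"
proof -
  consider "h = 0" | "h \<ge> 1" | "h \<le> -1" by linarith
  then show ?thesis
  proof cases
    case 2 then have "real_of_int h \<ge> 1" by simp
    then show ?thesis by auto
  next
    case 3 then have "real_of_int h \<le> -1" by simp
    then show ?thesis by auto
  qed simp
qed

lemma Vt_configs: "u \<in> configs n \<Longrightarrow> Vt u = (\<Sum>k\<le>n. \<bar>real_of_int (ht (take k u))\<bar>)"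
  by (simp add: Vt_def configs_def)

lemma sum_PP: "(\<Sum>p\<in>PP. f p) = f [1,2] + f [2,1]"
  by (simp add: PP_def)

lemma FV_eq: "(\<Sum>w\<in>configs (n+2). real (flips w) * Vt w) = (2 * real n + 6) * Avol n + 2 * Rz n"
proof -
  have "(\<Sum>w\<in>configs (n+2). real (flips w) * Vt w) = (\<Sum>(u,i,p)\<in>configs n \<times> ({..n} \<times> PP). Vt (ins u i p))"
    unfolding sum_flips by (rule sum_insert_bij)
  also have "\<dots> = (\<Sum>u\<in>configs n. \<Sum>i\<le>n. \<Sum>p\<in>PP. Vt (ins u i p))"
    by (simp add: sum.cartesian_product)
  also have "\<dots> = (\<Sum>u\<in>configs n. \<Sum>i\<le>n. 2 * Vt u + 4 * \<bar>real_of_int (ht (take i u))\<bar> + 2 * (if ht (take i u) = 0 then 1 else 0))"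
  proof (intro sum.cong refl)
    fix u i assume u: "u \<in> configs n" and i: "i \<in> {..n}"
    have "(\<Sum>p\<in>PP. Vt (ins u i p)) = (\<Sum>p\<in>PP. Vt u + \<bar>real_of_int (ht (take i u))\<bar> + \<bar>real_of_int (ht (take i u)) + real_of_int (ht [hd p])\<bar>)"
      using u i by (intro sum.cong refl Vt_ins) auto
    also have "\<dots> = 2 * Vt u + 2 * \<bar>real_of_int (ht (take i u))\<bar> + (\<bar>real_of_int (ht (take i u)) + 1\<bar> + \<bar>real_of_int (ht (take i u)) - 1\<bar>)"
      unfolding sum_PP by (simp add: ht_def occ_def)
    also have "\<dots> = 2 * Vt u + 4 * \<bar>real_of_int (ht (take i u))\<bar> + 2 * (if ht (take i u) = 0 then 1 else 0)"
      unfolding abs_pm1 by simp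
    finally show "(\<Sum>p\<in>PP. Vt (ins u i p)) = 2 * Vt u + 4 * \<bar>real_of_int (ht (take i u))\<bar> + 2 * (if ht (take i u) = 0 then 1 else 0)" .
  qed
  also have "\<dots> = (\<Sum>u\<in>configs n. (2 * real n + 6) * Vt u + 2 * (\<Sum>i\<le>n. if ht (take i u) = 0 then 1 else 0))"
  proof (rule sum.cong[OF refl])
    fix u assume u: "u \<in> configs n"
    show "(\<Sum>i\<le>n. 2 * Vt u + 4 * \<bar>real_of_int (ht (take i u))\<bar> + 2 * (if ht (take i u) = 0 then 1 else 0))
        = (2 * real n + 6) * Vt u + 2 * (\<Sum>i\<le>n. if ht (take i u) = 0 then 1 else 0)"
      using Vt_configs[OF u] by (simp add: sum.distrib sum_distrib_left[symmetric] algebra_simps)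
  qed
  also have "\<dots> = (2 * real n + 6) * Avol n + 2 * Rz n"
    by (simp add: sum.distrib sum_distrib_left Avol_def Rz_def Vt_configs)
  finally show ?thesis .
qed

lemma card_configs: "real (card (configs n)) = real_of_int (N n 0)"
proof -
  have "real (card (configs n)) = (\<Sum>u\<in>configs n. (\<lambda>_. 1::real) (ht (take 0 u)))" by simp
  also have "\<dots> = (\<Sum>h=-int n..int n. real_of_int (N 0 h * N n h) * 1)"
    by (subst sum_configs_at[where K="int n"]) auto
  also have "\<dots> = (\<Sum>h=-int n..int n. if h = 0 then real_of_int (N n 0) else 0)"
    by (rule sum.cong) auto
  finally show ?thesis by simp
qed

lemma F_eq: "(\<Sum>w\<in>configs (n+2). real (flips w)) = 2 * (real n + 1) * real_of_int (N n 0)"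
proof -
  have "(\<Sum>w\<in>configs (n+2). real (flips w)) = (\<Sum>w\<in>configs (n+2). real (flips w) * 1)" by simp
  also have "\<dots> = (\<Sum>(u,i,p)\<in>configs n \<times> ({..n} \<times> PP). (\<lambda>_. 1::real) (ins u i p))"
    unfolding sum_flips by (rule sum_insert_bij)
  also have "\<dots> = real (card (configs n \<times> ({..n} \<times> PP)))" by simp
  also have "\<dots> = real (card (configs n)) * (real n + 1) * 2"
    by (simp add: card_cartesian_product PP_def algebra_simps)
  finally show ?thesis unfolding card_configs by simp
qed



lemma lin_int_raw: fixes a b c :: real shows "((\<lambda>x. a + (x - c) * (b - a)) has_integral (a + b)/2) {c..c+1}"
proof -
  define \<Phi> where "\<Phi> x = a * x + (x - c)^2 * (b - a) / 2" for x :: real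
  have "((\<lambda>x. a + (x - c) * (b - a)) has_integral (\<Phi> (c+1) - \<Phi> c)) {c..c+1}"
  proof (rule fundamental_theorem_of_calculus)
    fix x :: real
    have "(\<Phi> has_real_derivative (a + (x - c) * (b - a))) (at x within {c..c+1})"
      unfolding \<Phi>_def by (auto intro!: derivative_eq_intros simp: field_simps)
    then show "(\<Phi> has_vector_derivative (a + (x - c) * (b - a))) (at x within {c..c+1})"
      by (simp add: has_real_derivative_iff_has_vector_derivative)
  qed simp
  moreover have "\<Phi> (c+1) - \<Phi> c = (a + b)/2" unfolding \<Phi>_def by (simp add: field_simps)
  ultimately show ?thesis by simp
qed

lemma lin_int_abs:
  fixes a b c :: real
  assumes "(0 \<le> a \<and> 0 \<le> b) \<or> (a \<le> 0 \<and> b \<le> 0)"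
  shows "((\<lambda>x. \<bar>a + (x - c) * (b - a)\<bar>) has_integral (\<bar>a\<bar> + \<bar>b\<bar>)/2) {c..c+1}"
  using assms
proof
  assume ab: "0 \<le> a \<and> 0 \<le> b"
  have "((\<lambda>x. a + (x - c) * (b - a)) has_integral (\<bar>a\<bar> + \<bar>b\<bar>)/2) {c..c+1}"
    using lin_int_raw[of a c b] ab by simp
  then show ?thesis
  proof (rule has_integral_eq[rotated])
    fix x assume x: "x \<in> {c..c+1}"
    have "0 \<le> (1 - (x - c)) * a" "0 \<le> (x - c) * b" using x ab by auto
    then have "0 \<le> a + (x - c) * (b - a)" by (simp add: algebra_simps)
    then show "a + (x - c) * (b - a) = \<bar>a + (x - c) * (b - a)\<bar>" by simp
  qed
next
  assume ab: "a \<le> 0 \<and> b \<le> 0"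
  have e: "(\<bar>a\<bar> + \<bar>b\<bar>)/2 = - ((a + b)/2)" 
  proof -
    have "\<bar>a\<bar> = -a" "\<bar>b\<bar> = -b" using ab by auto
    then show ?thesis by (simp add: field_simps)
  qed
  have "((\<lambda>x. - (a + (x - c) * (b - a))) has_integral (\<bar>a\<bar> + \<bar>b\<bar>)/2) {c..c+1}"
    unfolding e by (rule has_integral_neg[OF lin_int_raw])
  then show ?thesis
  proof (rule has_integral_eq[rotated])
    fix x assume x: "x \<in> {c..c+1}"
    have "(1 - (x - c)) * a \<le> 0" "(x - c) * b \<le> 0" using x ab
      by (auto simp: mult_nonneg_nonpos)
    then have "a + (x - c) * (b - a) \<le> 0" by (simp add: algebra_simps)
    then show "- (a + (x - c) * (b - a)) = \<bar>a + (x - c) * (b - a)\<bar>" by simp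
  qed
qed

lemma bl_on:
  assumes "x \<in> {real k..real k+1}"
  shows "broken_line w x = height w k + (x - real k) * (height w (Suc k) - height w k)"
proof (cases "x = real k + 1")
  case True
  then have "\<lfloor>x\<rfloor> = int (Suc k)" by simp
  then have "nat \<lfloor>x\<rfloor> = Suc k" by simp
  then show ?thesis using True unfolding broken_line_def Let_def by simp
next
  case False
  then have "\<lfloor>x\<rfloor> = int k" using assms by (simp add: floor_eq_iff)
  then have "nat \<lfloor>x\<rfloor> = k" by simp
  then show ?thesis unfolding broken_line_def Let_def by simp
qed

lemma ht_step: "\<bar>ht (take (Suc k) w) - ht (take k w)\<bar> \<le> 1"
proof (cases "k < length w")
  case True
  then have "take (Suc k) w = take k w @ [w!k]" by (simp add: take_Suc_conv_app_nth)
  then show ?thesis by (simp add: ht_append ht_def occ_def)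
next
  case False
  then show ?thesis by simp
qed

lemma same_sign:
  assumes "\<bar>b - a\<bar> \<le> (1::int)"
  shows "(0 \<le> real_of_int a \<and> 0 \<le> real_of_int b) \<or> (real_of_int a \<le> 0 \<and> real_of_int b \<le> 0)"
proof -
  have "(0 \<le> a \<and> 0 \<le> b) \<or> (a \<le> 0 \<and> b \<le> 0)" using assms by (auto simp: abs_le_iff)
  then show ?thesis by auto
qed

lemma vol_int: "((\<lambda>x. \<bar>broken_line w x\<bar>) has_integral (\<Sum>k<n. (\<bar>height w k\<bar> + \<bar>height w (Suc k)\<bar>)/2)) {0..real n}"
proof (induction n)
  case 0
  then show ?case using has_integral_refl(2)[of "\<lambda>x. \<bar>broken_line w x\<bar>" "0::real"] by simp
next
  case (Suc n)
  have "((\<lambda>x. \<bar>height w n + (x - real n) * (height w (Suc n) - height w n)\<bar>) has_integral (\<bar>height w n\<bar> + \<bar>height w (Suc n)\<bar>)/2) {real n..real n+1}"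
    unfolding height_ht by (rule lin_int_abs, rule same_sign, rule ht_step)
  then have "((\<lambda>x. \<bar>broken_line w x\<bar>) has_integral (\<bar>height w n\<bar> + \<bar>height w (Suc n)\<bar>)/2) {real n..real n + 1}"
  proof (rule has_integral_eq[rotated])
    fix x assume "x \<in> {real n..real n + 1}"
    then show "\<bar>height w n + (x - real n) * (height w (Suc n) - height w n)\<bar> = \<bar>broken_line w x\<bar>"
      using bl_on[of x n w] by simp
  qed
  then have "((\<lambda>x. \<bar>broken_line w x\<bar>) has_integral (\<bar>height w n\<bar> + \<bar>height w (Suc n)\<bar>)/2) {real n..real (Suc n)}"
    by (simp add: add.commute)
  from has_integral_combine[OF _ _ Suc.IH this] show ?case by simp
qed

lemma volume_configs:
  assumes "w \<in> configs n"
  shows "volume w = (\<Sum>k\<le>n. \<bar>real_of_int (ht (take k w))\<bar>)"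
proof -
  have ln: "length w = n" using assms by (simp add: configs_def)
  have h0: "height w n = 0" using assms ln by (simp add: height_def configs_def)
  have "volume w = (\<Sum>k<n. (\<bar>height w k\<bar> + \<bar>height w (Suc k)\<bar>)/2)"
    unfolding volume_def ln using vol_int by (rule integral_unique)
  also have "\<dots> = ((\<Sum>k<n. \<bar>height w k\<bar>) + (\<Sum>k<n. \<bar>height w (Suc k)\<bar>)) / 2"
    by (simp add: sum.distrib sum_divide_distrib[symmetric])
  also have "(\<Sum>k<n. \<bar>height w k\<bar>) = (\<Sum>k\<le>n. \<bar>height w k\<bar>)"
    using h0 by (simp add: lessThan_Suc_atMost[symmetric])
  also have "(\<Sum>k<n. \<bar>height w (Suc k)\<bar>) = (\<Sum>k\<le>n. \<bar>height w k\<bar>)"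
  proof -
    have "(\<Sum>k\<le>n. \<bar>height w k\<bar>) = \<bar>height w 0\<bar> + (\<Sum>k<n. \<bar>height w (Suc k)\<bar>)"
      unfolding lessThan_Suc_atMost[symmetric] by (rule sum.lessThan_Suc_shift)
    then show ?thesis by (simp add: height_def)
  qed
  finally show ?thesis by (simp add: height_ht)
qed



lemma cc_pos: "cc m > 0" unfolding cc_def by simp

lemma mean_formula:
  "mean_volume (2*(M+2)) = 4^(M+1) * (2*(real M+1)^2 + 3*(real M+1) + 2) / (2*(2*real M+3) * cc (M+1))"
proof -
  define n where "n = 2*(M+1)"
  have e: "2*(M+2) = n+2" unfolding n_def by simp
  have "mean_volume (n+2) = (\<Sum>w\<in>configs (n+2). real (flips w) * Vt w) / (\<Sum>w\<in>configs (n+2). real (flips w))"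
    unfolding mean_volume_def nu_def sum_divide_distrib
    by (rule sum.cong[OF refl]) (simp add: volume_configs Vt_configs)
  also have "\<dots> = ((2 * real n + 6) * Avol n + 2 * Rz n) / (2 * (real n + 1) * real_of_int (N n 0))"
    unfolding FV_eq F_eq ..
  also have "Avol n = 2 * real (Suc M) * 4^M" unfolding n_def using Avol_val[of M] by simp
  also have "Rz n = 4^(M+1)" unfolding n_def by (rule Rz_val)
  also have "real_of_int (N n 0) = cc (M+1)" unfolding n_def by (rule N_even0_cc)
  finally have "mean_volume (n+2) = ((2 * real n + 6) * (2 * real (Suc M) * 4^M) + 2 * 4^(M+1)) / (2 * (real n + 1) * cc (M+1))" .
  also have "\<dots> = 4^(M+1) * (2*(real M+1)^2 + 3*(real M+1) + 2) / (2*(2*real M+3) * cc (M+1))"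
    unfolding n_def by (simp add: field_simps power2_eq_square)
  finally show ?thesis unfolding e .
qed

lemma aux_w:
  fixes A c u v y :: real
  assumes "c \<noteq> 0" "u \<noteq> 0" "v \<noteq> 0" "y \<noteq> 0"
  shows "A/(u*c^2) * (4*y^2/(u * v)) = (16*A)/(v * (2*u*c/y)^2)"
  using assms by (simp add: field_simps power2_eq_square)

lemma aux_q:
  fixes F X c v p z :: real
  assumes "c \<noteq> 0" "p \<noteq> 0" "v \<noteq> 0" "z \<noteq> 0"
  shows "(F * X / (2 * v * c))^2 / (2 * p / 64 * z^3) = F^2 / (v * c^2) * (X^2 * 8 / (v * p * z^3))"
  using assms by (simp add: field_simps power2_eq_square)

lemma wallis_cc: "(\<Prod>k=1..m. (4*real k^2)/(4*real k^2 - 1)) = 16^m / ((2*real m+1) * cc m^2)"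
proof (induction m)
  case 0 then show ?case by (simp add: cc_def)
next
  case (Suc m)
  have c: "cc m > 0" by (rule cc_pos)
  have cc1: "cc (Suc m) = 2*(2*real m+1)*cc m/(real m+1)"
    using cc_rec[of m] by (simp add: field_simps)
  have f: "4*(real m+1)^2 - 1 = (2*real m+1)*(2*real m+3)" by (simp add: algebra_simps power2_eq_square)
  have "(\<Prod>k=1..Suc m. (4*real k^2)/(4*real k^2 - 1)) = (\<Prod>k=1..m. (4*real k^2)/(4*real k^2 - 1)) * ((4*(real m+1)^2)/(4*(real m+1)^2 - 1))"
    by (simp add: prod.cl_ivl_Suc add.commute)
  also have "\<dots> = 16^m / ((2*real m+1) * cc m^2) * ((4*(real m+1)^2)/((2*real m+1)*(2*real m+3)))"
    unfolding Suc.IH f ..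
  also have "\<dots> = (16 * 16^m) / ((2*real m+3) * (2*(2*real m+1)*cc m/(real m+1))^2)"
    by (rule aux_w) (use c in auto)
  also have "\<dots> = 16^(Suc m) / ((2*real (Suc m)+1) * cc (Suc m)^2)"
    unfolding cc1 by simp
  finally show ?case .
qed

lemma W_lim: "(\<lambda>m. 16^m / ((2*real m+1) * cc m^2)) \<longlonglongrightarrow> pi/2"
  using wallis unfolding wallis_cc .

lemma q_lim: "(\<lambda>M::nat. (2*(real M+1)^2 + 3*(real M+1) + 2)^2 * 8 / ((2*real M+3) * pi * (2*real M+4)^3)) \<longlonglongrightarrow> 2/pi"
proof -
  have "(\<lambda>M::nat. (2*(real M+1)^2 + 3*(real M+1) + 2)^2 * 8 / ((2*real M+3) * pi * (2*real M+4)^3)) \<longlonglongrightarrow> 2 * inverse pi"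
    by real_asymp
  then show ?thesis by (simp add: field_simps)
qed

theorem proposition2:
  shows "(\<lambda>m. mean_volume (2 * m)) \<sim>[at_top]
         (\<lambda>m. sqrt (2 * pi) / 8 * real (2 * m) * sqrt (real (2 * m)))"
proof (rule asymp_equivI')
  define f where "f m = mean_volume (2 * m)" for m
  define g where "g m = sqrt (2 * pi) / 8 * real (2 * m) * sqrt (real (2 * m))" for m
  define W where "W m = 16^m / ((2*real m+1) * cc m^2)" for m
  define q where "q M = (2*(real M+1)^2 + 3*(real M+1) + 2)^2 * 8 / ((2*real M+3) * pi * (2*real M+4)^3)" for M
  have sq: "(f (M+2) / g (M+2))^2 = W (M+1) * q M" for M
  proof -
    have g2: "(g (M+2))^2 = 2 * pi / 64 * (2*real M+4)^3"
      unfolding g_def by (simp add: power_mult_distrib power2_eq_square power3_eq_cube field_simps algebra_simps)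
    have "(f (M+2) / g (M+2))^2 = (f (M+2))^2 / (g (M+2))^2" by (simp add: power_divide)
    also have "\<dots> = (4^(M+1) * (2*(real M+1)^2 + 3*(real M+1) + 2) / (2*(2*real M+3) * cc (M+1)))^2 / (2 * pi / 64 * (2*real M+4)^3)"
      by (simp only: g2 f_def mean_formula)
    also have "\<dots> = (4^(M+1))^2 / ((2*real M+3) * cc (M+1)^2) * ((2*(real M+1)^2 + 3*(real M+1) + 2)^2 * 8 / ((2*real M+3) * pi * (2*real M+4)^3))"
      by (rule aux_q) (use cc_pos[of "M+1"] in auto)
    also have "((4::real)^(M+1))^2 = 16^(M+1)" by (simp add: power_mult_distrib[symmetric] power2_eq_square)
    also have "16^(M+1) / ((2*real M+3) * cc (M+1)^2) = W (M+1)" unfolding W_def by simp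
    finally show ?thesis unfolding q_def .
  qed
  have pos: "f (M+2) / g (M+2) \<ge> 0" for M
    unfolding f_def g_def mean_formula using cc_pos[of "M+1"] by simp
  have "(\<lambda>M. W (M+1) * q M) \<longlonglongrightarrow> pi/2 * (2/pi)"
    using tendsto_mult[OF W_lim[THEN LIMSEQ_Suc] q_lim] unfolding W_def q_def by simp
  then have "(\<lambda>M. sqrt (W (M+1) * q M)) \<longlonglongrightarrow> sqrt (pi/2 * (2/pi))"
    by (rule tendsto_real_sqrt)
  moreover have "sqrt (W (M+1) * q M) = f (M+2) / g (M+2)" for M
    unfolding sq[symmetric] real_sqrt_abs using pos[of M] by (rule abs_of_nonneg)
  ultimately have "(\<lambda>M. f (M+2) / g (M+2)) \<longlonglongrightarrow> 1" by simp
  then have "(\<lambda>m. f m / g m) \<longlonglongrightarrow> 1" by (rule LIMSEQ_offset)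
  then show "((\<lambda>m. mean_volume (2 * m) / (sqrt (2 * pi) / 8 * real (2 * m) * sqrt (real (2 * m)))) \<longlongrightarrow> 1) at_top"
    unfolding f_def g_def .
qed

end
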